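(* Let $\Omega\subset\mathbb{R}^n$ be a bounded domain and take $\omega=\Omega$. Let $m\ge 2$ and $k\ge 1$ be integers, and let $y_0\in L^2(\Omega)$ with $y_0\notin\mathcal{S}_m$. Then Problem $(\mathcal{P})$ (for these $\Omega,\omega=\Omega,k,m,y_0$) does not have optimal controls if and only if $k<m$ and $$\big(\langle y_0,\xi_{k+1}\rangle,\langle y_0,\xi_{k+2}\rangle,\dots,\langle y_0,\xi_m\rangle\big)^T\neq 0 .$$
   Context: Let $\Omega\subset\mathbb{R}^n$ be a bounded domain and $\omega\subset\Omega$ a nonempty open set with characteristic function $\chi_\omega$. Let $\{\xi_i\}_{i\ge1}$ be an orthonormal basis of $L^2(\Omega)$ consisting of eigenfunctions of $-\Delta$ with homogeneous Dirichlet boundary condition, with eigenvalues $0<\lambda_1<\lambda_2\le\lambda_3\le\cdots\to+\infty$; $\langle\cdot,\cdot\rangle$ is the $L^2(\Omega)$ inner product. For $u$ and $y_0\in L^2(\Omega)$, $y(\cdot;u,y_0):\mathbb{R}^+\to L^2(\Omega)$ denotes the solution of $\partial_t y-\Delta y=\chi_\omega u$ in $\Omega\times\mathbb{R}^+$, $y=0$ on $\partial\Omega\times\mathbb{R}^+$, $y(\cdot,0)=y_0$. For a fixed integer $m\ge2$, the target set is $\mathcal{S}_m=\mathrm{span}\{\xi_{m+1},\xi_{m+2},\dots\}$ (the closed linear span, i.e. the set of $y\in L^2(\Omega)$ with $\langle y,\xi_i\rangle=0$ for $i=1,\dots,m$). For an integer $k\ge1$ and positive numbers $\bar a_1,\dots,\bar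 a_k$, the control constraint set is $\mathcal{U}_{\{\bar a_i\}_{i=1}^k}=\{\sum_{i=1}^k\alpha_i(\cdot)\xi_i:\ \text{each }\alpha_i \text{ is measurable from }\mathbb{R}^+\text{ to }[-\bar a_i,\bar a_i]\}$. Problem $(\mathcal{P})$ with $\{\bar a_i\}_{i=1}^k$ is: $\inf\{t\ge0: y(t;u,y_0)\in\mathcal{S}_m\}$ over $u\in\mathcal{U}_{\{\bar a_i\}_{i=1}^k}$; an optimal control is an admissible $u^*$ with $y(t^*;u^*,y_0)\in\mathcal{S}_m$ where $t^*$ is this infimum (the optimal time). For fixed $\Omega,\omega,k,y_0\notin\mathcal{S}_m$, one says "Problem $(\mathcal{P})$ has optimal controls" if for every finite sequence of positive numbers $\{\bar a_i\}_{i=1}^k$ the problem $(\mathcal{P})$ with $\{\bar a_i\}_{i=1}^k$ has an optimal control. *)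

theory Defs
  imports "HOL-Analysis.Analysis"
begin

text \<open>Functions on \<Omega> \<subseteq> R^n are represented by real-valued functions on real^'n;
  elements of L2(\<Omega>) by square-integrable representatives.\<close>

definition L2 :: "(real^'n) set \<Rightarrow> (real^'n \<Rightarrow> real) \<Rightarrow> bool" where
  "L2 \<Omega> f \<longleftrightarrow> set_borel_measurable lebesgue \<Omega> f \<and> set_integrable lebesgue \<Omega> (\<lambda>x. (f x)^2)"

definition l2_inner :: "(real^'n) set \<Rightarrow> (real^'n \<Rightarrow> real) \<Rightarrow> (real^'n \<Rightarrow> real) \<Rightarrow> real" where
  "l2_inner \<Omega> f g = (LINT x:\<Omega>|lebesgue. f x * g x)"

definition partial :: "'n::finite \<Rightarrow> (real^'n \<Rightarrow> real) \<Rightarrow> real^'n \<Rightarrow> real" where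
  "partial j f x = frechet_derivative f (at x) (axis j 1)"

definition grad :: "(real^'n::finite \<Rightarrow> real) \<Rightarrow> real^'n \<Rightarrow> real^'n" where
  "grad f x = (\<chi> j. partial j f x)"

text \<open>Test functions C_c^\<infinity>(\<Omega>): all iterated partial derivatives exist everywhere
  (hence are continuous), compact support contained in \<Omega>.\<close>
definition test_fun :: "(real^'n::finite) set \<Rightarrow> (real^'n \<Rightarrow> real) \<Rightarrow> bool" where
  "test_fun \<Omega> \<phi> \<longleftrightarrow>
     (\<forall>js :: 'n list. \<forall>x. (foldr partial js \<phi>) differentiable (at x)) \<and>
     compact (closure {x. \<phi> x \<noteq> 0}) \<and> closure {x. \<phi> x \<noteq> 0} \<subseteq> \<Omega>"

definition weak_grad :: "(real^'n::finite) set \<Rightarrow> (real^'n \<Rightarrow> real) \<Rightarrow> (real^'n \<Rightarrow> real^'n) \<Rightarrow> bool" where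
  "weak_grad \<Omega> \<xi> G \<longleftrightarrow>
     (\<forall>j. L2 \<Omega> (\<lambda>x. G x $ j)) \<and>
     (\<forall>\<phi> j. test_fun \<Omega> \<phi> \<longrightarrow>
        (LINT x:\<Omega>|lebesgue. \<xi> x * partial j \<phi> x) = - (LINT x:\<Omega>|lebesgue. G x $ j * \<phi> x))"

definition in_H10 :: "(real^'n::finite) set \<Rightarrow> (real^'n \<Rightarrow> real) \<Rightarrow> (real^'n \<Rightarrow> real^'n) \<Rightarrow> bool" where
  "in_H10 \<Omega> \<xi> G \<longleftrightarrow> L2 \<Omega> \<xi> \<and> weak_grad \<Omega> \<xi> G \<and>
     (\<exists>\<phi>s :: nat \<Rightarrow> real^'n \<Rightarrow> real. (\<forall>l. test_fun \<Omega> (\<phi>s l)) \<and>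
        (\<lambda>l. LINT x:\<Omega>|lebesgue. (\<phi>s l x - \<xi> x)^2) \<longlonglongrightarrow> 0 \<and>
        (\<lambda>l. LINT x:\<Omega>|lebesgue. (norm (grad (\<phi>s l) x - G x))^2) \<longlonglongrightarrow> 0)"

definition dirichlet_eigen :: "(real^'n::finite) set \<Rightarrow> (real^'n \<Rightarrow> real) \<Rightarrow> real \<Rightarrow> bool" where
  "dirichlet_eigen \<Omega> \<xi> lam \<longleftrightarrow> (\<exists>G. in_H10 \<Omega> \<xi> G \<and>
     (\<forall>\<phi>. test_fun \<Omega> \<phi> \<longrightarrow>
        (LINT x:\<Omega>|lebesgue. G x \<bullet> grad \<phi> x) = lam * (LINT x:\<Omega>|lebesgue. \<xi> x * \<phi> x)))"

text \<open>{\<xi>_i}_{i\<ge>1} is an orthonormal basis of L2(\<Omega>) of Dirichlet eigenfunctions with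
  eigenvalues 0 < lam_1 < lam_2 \<le> lam_3 \<le> ... \<rightarrow> \<infinity> (indices start at 1).\<close>
definition dirichlet_ONB :: "(real^'n::finite) set \<Rightarrow> (nat \<Rightarrow> real^'n \<Rightarrow> real) \<Rightarrow> (nat \<Rightarrow> real) \<Rightarrow> bool" where
  "dirichlet_ONB \<Omega> \<xi> lam \<longleftrightarrow>
     (\<forall>i\<ge>1. L2 \<Omega> (\<xi> i) \<and> dirichlet_eigen \<Omega> (\<xi> i) (lam i)) \<and>
     (\<forall>i\<ge>1. \<forall>j\<ge>1. l2_inner \<Omega> (\<xi> i) (\<xi> j) = (if i = j then 1 else 0)) \<and>
     (\<forall>f. L2 \<Omega> f \<and> (\<forall>i\<ge>1. l2_inner \<Omega> f (\<xi> i) = 0) \<longrightarrow> (LINT x:\<Omega>|lebesgue. (f x)^2) = 0) \<and>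
     0 < lam 1 \<and> lam 1 < lam 2 \<and> (\<forall>i\<ge>2. lam i \<le> lam (Suc i)) \<and>
     filterlim lam at_top sequentially"

definition in_S :: "(real^'n) set \<Rightarrow> (nat \<Rightarrow> real^'n \<Rightarrow> real) \<Rightarrow> nat \<Rightarrow> (real^'n \<Rightarrow> real) \<Rightarrow> bool" where
  "in_S \<Omega> \<xi> m f \<longleftrightarrow> (\<forall>i\<in>{1..m}. l2_inner \<Omega> f (\<xi> i) = 0)"

definition ctrl :: "(nat \<Rightarrow> real^'n \<Rightarrow> real) \<Rightarrow> nat \<Rightarrow> (nat \<Rightarrow> real \<Rightarrow> real) \<Rightarrow> real \<Rightarrow> real^'n \<Rightarrow> real" where
  "ctrl \<xi> k \<alpha> = (\<lambda>t x. \<Sum>i=1..k. \<alpha> i t * \<xi> i x)"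

definition U_set :: "(nat \<Rightarrow> real^'n \<Rightarrow> real) \<Rightarrow> nat \<Rightarrow> (nat \<Rightarrow> real) \<Rightarrow> (real \<Rightarrow> real^'n \<Rightarrow> real) set" where
  "U_set \<xi> k abar = {ctrl \<xi> k \<alpha> | \<alpha>. \<forall>i\<in>{1..k}.
      \<alpha> i \<in> borel_measurable (restrict_space borel {0..}) \<and> (\<forall>t\<ge>0. \<bar>\<alpha> i t\<bar> \<le> abar i)}"

text \<open>Fourier coefficients of the (mild) solution y(t;u,y0) of
  y_t - \<Delta>y = \<chi>_\<omega> u, y = 0 on \<partial>\<Omega>, y(0) = y0:
  <y(t),\<xi>_i> = e^{-lam_i t}<y0,\<xi>_i> + \<integral>_0^t e^{-lam_i (t-s)} <\<chi>_\<omega> u(s), \<xi>_i> ds.\<close>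
definition heat_coeff :: "(real^'n) set \<Rightarrow> (real^'n) set \<Rightarrow> (nat \<Rightarrow> real^'n \<Rightarrow> real) \<Rightarrow> (nat \<Rightarrow> real)
     \<Rightarrow> (real \<Rightarrow> real^'n \<Rightarrow> real) \<Rightarrow> (real^'n \<Rightarrow> real) \<Rightarrow> real \<Rightarrow> nat \<Rightarrow> real" where
  "heat_coeff \<Omega> \<omega> \<xi> lam u y0 t i =
     exp (- lam i * t) * l2_inner \<Omega> y0 (\<xi> i) +
     (LINT s:{0..t}|lborel. exp (- lam i * (t - s)) * l2_inner \<Omega> (\<lambda>x. indicator \<omega> x * u s x) (\<xi> i))"

definition state_in_S :: "(real^'n) set \<Rightarrow> (real^'n) set \<Rightarrow> (nat \<Rightarrow> real^'n \<Rightarrow> real) \<Rightarrow> (nat \<Rightarrow> real)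
     \<Rightarrow> nat \<Rightarrow> (real \<Rightarrow> real^'n \<Rightarrow> real) \<Rightarrow> (real^'n \<Rightarrow> real) \<Rightarrow> real \<Rightarrow> bool" where
  "state_in_S \<Omega> \<omega> \<xi> lam m u y0 t \<longleftrightarrow> (\<forall>i\<in>{1..m}. heat_coeff \<Omega> \<omega> \<xi> lam u y0 t i = 0)"

definition reach_times :: "(real^'n) set \<Rightarrow> (real^'n) set \<Rightarrow> (nat \<Rightarrow> real^'n \<Rightarrow> real) \<Rightarrow> (nat \<Rightarrow> real)
     \<Rightarrow> nat \<Rightarrow> nat \<Rightarrow> (nat \<Rightarrow> real) \<Rightarrow> (real^'n \<Rightarrow> real) \<Rightarrow> real set" where
  "reach_times \<Omega> \<omega> \<xi> lam k m abar y0 =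
     {t. t \<ge> 0 \<and> (\<exists>u\<in>U_set \<xi> k abar. state_in_S \<Omega> \<omega> \<xi> lam m u y0 t)}"

definition optimal_control :: "(real^'n) set \<Rightarrow> (real^'n) set \<Rightarrow> (nat \<Rightarrow> real^'n \<Rightarrow> real) \<Rightarrow> (nat \<Rightarrow> real)
     \<Rightarrow> nat \<Rightarrow> nat \<Rightarrow> (nat \<Rightarrow> real) \<Rightarrow> (real^'n \<Rightarrow> real) \<Rightarrow> (real \<Rightarrow> real^'n \<Rightarrow> real) \<Rightarrow> bool" where
  "optimal_control \<Omega> \<omega> \<xi> lam k m abar y0 u \<longleftrightarrow>
     u \<in> U_set \<xi> k abar \<and> reach_times \<Omega> \<omega> \<xi> lam k m abar y0 \<noteq> {} \<and>
     state_in_S \<Omega> \<omega> \<xi> lam m u y0 (Inf (reach_times \<Omega> \<omega> \<xi> lam k m abar y0))"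

definition has_optimal_controls :: "(real^'n) set \<Rightarrow> (real^'n) set \<Rightarrow> (nat \<Rightarrow> real^'n \<Rightarrow> real) \<Rightarrow> (nat \<Rightarrow> real)
     \<Rightarrow> nat \<Rightarrow> nat \<Rightarrow> (real^'n \<Rightarrow> real) \<Rightarrow> bool" where
  "has_optimal_controls \<Omega> \<omega> \<xi> lam k m y0 \<longleftrightarrow>
     (\<forall>abar. (\<forall>i\<in>{1..k}. abar i > 0) \<longrightarrow> (\<exists>u. optimal_control \<Omega> \<omega> \<xi> lam k m abar y0 u))"

end

theory Submission imports Defs begin

lemma L2_prod_int:
  assumes "L2 \<Omega> f" "L2 \<Omega> g"
  shows "integrable lebesgue (\<lambda>x. indicator \<Omega> x * (f x * g x))"
proof -
  have mf: "(\<lambda>x. indicator \<Omega> x * f x) \<in> borel_measurable lebesgue"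
    and mg: "(\<lambda>x. indicator \<Omega> x * g x) \<in> borel_measurable lebesgue"
    and if2: "integrable lebesgue (\<lambda>x. indicator \<Omega> x * (f x)^2)"
    and ig2: "integrable lebesgue (\<lambda>x. indicator \<Omega> x * (g x)^2)"
    using assms unfolding L2_def set_integrable_def set_borel_measurable_def by auto
  have m: "(\<lambda>x. indicator \<Omega> x * (f x * g x)) \<in> borel_measurable lebesgue"
  proof -
    have "(\<lambda>x. (indicator \<Omega> x * f x) * (indicator \<Omega> x * g x)) \<in> borel_measurable lebesgue"
      using mf mg by measurable
    moreover have "(\<lambda>x. (indicator \<Omega> x * f x) * (indicator \<Omega> x * g x)) = (\<lambda>x. indicator \<Omega> x * (f x * g x))"
      by (auto simp: indicator_def)
    ultimately show ?thesis by simp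
  qed
  show ?thesis
  proof (rule Bochner_Integration.integrable_bound[OF Bochner_Integration.integrable_add[OF if2 ig2] m])
    show "AE x in lebesgue. norm (indicator \<Omega> x * (f x * g x)) \<le> norm (indicator \<Omega> x * (f x)\<^sup>2 + indicator \<Omega> x * (g x)\<^sup>2)"
    proof (rule AE_I2)
      fix x
      have h0: "0 \<le> (\<bar>f x\<bar> - \<bar>g x\<bar>)^2" by simp
      have h1: "(\<bar>f x\<bar> - \<bar>g x\<bar>)^2 = (f x)^2 + (g x)^2 - 2 * (\<bar>f x\<bar> * \<bar>g x\<bar>)"
        by (simp add: power2_diff)
      have h2: "0 \<le> (f x)^2" "0 \<le> (g x)^2" by simp_all
      have "\<bar>f x * g x\<bar> \<le> (f x)^2 + (g x)^2"
        using h0 h1 h2 unfolding abs_mult by linarith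
      then show "norm (indicator \<Omega> x * (f x * g x)) \<le> norm (indicator \<Omega> x * (f x)\<^sup>2 + indicator \<Omega> x * (g x)\<^sup>2)"
        by (auto simp: indicator_def)
    qed
  qed
qed


lemma inner_ctrl:
  assumes L: "\<And>i. i \<ge> 1 \<Longrightarrow> L2 \<Omega> (\<xi> i)"
    and O: "\<And>i j. i \<ge> 1 \<Longrightarrow> j \<ge> 1 \<Longrightarrow> l2_inner \<Omega> (\<xi> i) (\<xi> j) = (if i = j then 1 else 0)"
    and i: "i \<ge> 1"
  shows "l2_inner \<Omega> (\<lambda>x. indicator \<Omega> x * ctrl \<xi> k \<alpha> s x) (\<xi> i) = (if i \<in> {1..k} then \<alpha> i s else 0)"
proof -
  have "l2_inner \<Omega> (\<lambda>x. indicator \<Omega> x * ctrl \<xi> k \<alpha> s x) (\<xi> i)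
      = integral\<^sup>L lebesgue (\<lambda>x. \<Sum>j\<in>{1..k}. \<alpha> j s * (indicator \<Omega> x * (\<xi> j x * \<xi> i x)))"
    unfolding l2_inner_def set_lebesgue_integral_def ctrl_def
    by (rule Bochner_Integration.integral_cong) (auto simp: indicator_def sum_distrib_left sum_distrib_right mult.assoc mult.left_commute)
  also have "\<dots> = (\<Sum>j\<in>{1..k}. \<alpha> j s * integral\<^sup>L lebesgue (\<lambda>x. indicator \<Omega> x * (\<xi> j x * \<xi> i x)))"
    by (subst Bochner_Integration.integral_sum) (auto intro!: L2_prod_int L i)
  also have "\<dots> = (\<Sum>j\<in>{1..k}. \<alpha> j s * l2_inner \<Omega> (\<xi> j) (\<xi> i))"
    unfolding l2_inner_def set_lebesgue_integral_def by simp
  also have "\<dots> = (\<Sum>j\<in>{1..k}. (if j = i then \<alpha> j s else 0))"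
    by (rule sum.cong) (use O i in auto)
  also have "\<dots> = (if i \<in> {1..k} then \<alpha> i s else 0)"
    by (simp add: sum.delta)
  finally show ?thesis .
qed

lemma exp_integral:
  fixes l t :: real
  assumes "l > 0" "t \<ge> 0"
  shows "(LINT s:{0..t}|lborel. exp (- l * (t - s))) = (1 - exp (- l * t)) / l"
proof -
  have "integral\<^sup>L lborel (\<lambda>s. indicator {0..t} s *\<^sub>R exp (- l * (t - s)))
        = exp (- l * (t - t)) / l - exp (- l * (t - 0)) / l"
  proof (rule integral_FTC_atLeastAtMost)
    fix x assume "0 \<le> x" "x \<le> t"
    have d: "((\<lambda>s. - l * (t - s)) has_real_derivative l) (at x)"
      by (auto intro!: derivative_eq_intros)
    have "((\<lambda>s. exp (- l * (t - s)) / l) has_real_derivative exp (- l * (t - x)) * l / l) (at x)"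
      by (intro DERIV_cdivide DERIV_fun_exp d)
    then have "((\<lambda>s. exp (- l * (t - s)) / l) has_real_derivative exp (- l * (t - x))) (at x)"
      using assms(1) by simp
    then show "((\<lambda>s. exp (- l * (t - s)) / l) has_vector_derivative exp (- l * (t - x))) (at x within {0..t})"
      by (simp add: has_real_derivative_iff_has_vector_derivative has_vector_derivative_at_within)
  next
    show "continuous_on {0..t} (\<lambda>s. exp (- l * (t - s)))"
      by (intro continuous_intros)
  qed (use assms in auto)
  then show ?thesis
    unfolding set_lebesgue_integral_def by (simp add: diff_divide_distrib)
qed

lemma exp_integral_bound:
  fixes l t A :: real and \<alpha> :: "real \<Rightarrow> real"
  assumes "l > 0" "t \<ge> 0" "\<And>s. 0 \<le> s \<Longrightarrow> \<bar>\<alpha> s\<bar> \<le> A"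
  shows "\<bar>LINT s:{0..t}|lborel. exp (- l * (t - s)) * \<alpha> s\<bar> \<le> A * ((1 - exp (- l * t)) / l)"
proof -
  have A: "A \<ge> 0" using assms(3)[of 0] by simp
  have "\<bar>LINT s:{0..t}|lborel. exp (- l * (t - s)) * \<alpha> s\<bar>
      \<le> integral\<^sup>L lborel (\<lambda>s. norm (indicator {0..t} s *\<^sub>R (exp (- l * (t - s)) * \<alpha> s)))"
    unfolding set_lebesgue_integral_def
    using integral_norm_bound[of lborel "\<lambda>s. indicator {0..t} s *\<^sub>R (exp (- l * (t - s)) * \<alpha> s)"]
    by (simp only: real_norm_def)
  also have "\<dots> \<le> integral\<^sup>L lborel (\<lambda>s. indicator {0..t} s *\<^sub>R (A * exp (- l * (t - s))))"
  proof (rule integral_mono')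
    show "integrable lborel (\<lambda>s. indicator {0..t} s *\<^sub>R (A * exp (- l * (t - s))))"
    proof -
      have c: "continuous_on {0..t} (\<lambda>s. A * exp (- l * (t - s)))"
        by (intro continuous_intros)
      show ?thesis using borel_integrable_atLeastAtMost'[OF c] unfolding set_integrable_def .
    qed
    fix s
    show "0 \<le> indicator {0..t} s *\<^sub>R (A * exp (- l * (t - s)))" using A by (simp add: indicator_def)
    show "norm (indicator {0..t} s *\<^sub>R (exp (- l * (t - s)) * \<alpha> s)) \<le> indicator {0..t} s *\<^sub>R (A * exp (- l * (t - s)))"
      using assms(3)[of s] by (auto simp: indicator_def abs_mult mult.commute)
  qed
  also have "\<dots> = A * (LINT s:{0..t}|lborel. exp (- l * (t - s)))"
    unfolding set_lebesgue_integral_def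
    using integral_mult_right_zero[where M=lborel and c=A and f="\<lambda>s. indicator {0..t} s * exp (- l * (t - s))"]
    by (simp add: ac_simps)
  also have "\<dots> = A * ((1 - exp (- l * t)) / l)" using exp_integral assms by simp
  finally show ?thesis .
qed

lemma const_integral:
  fixes l t a :: real
  assumes "l > 0" "t \<ge> 0"
  shows "(LINT s:{0..t}|lborel. exp (- l * (t - s)) * a) = a * ((1 - exp (- l * t)) / l)"
  using exp_integral[OF assms] by (simp add: mult.commute)

lemma heat_ctrl:
  assumes L: "\<And>i. i \<ge> 1 \<Longrightarrow> L2 \<Omega> (\<xi> i)"
    and O: "\<And>i j. i \<ge> 1 \<Longrightarrow> j \<ge> 1 \<Longrightarrow> l2_inner \<Omega> (\<xi> i) (\<xi> j) = (if i = j then 1 else 0)"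
    and i: "i \<ge> 1"
  shows "heat_coeff \<Omega> \<Omega> \<xi> lam (ctrl \<xi> k \<alpha>) y0 t i = exp (- lam i * t) * l2_inner \<Omega> y0 (\<xi> i) +
     (LINT s:{0..t}|lborel. exp (- lam i * (t - s)) * (if i \<in> {1..k} then \<alpha> i s else 0))"
  unfolding heat_coeff_def using inner_ctrl[OF L O i] by simp

lemma alg1:
  fixes c A F l :: real
  assumes "F > 0" "l > 0" "\<bar>c\<bar> * inverse F \<le> A * ((1 - inverse F) / l)"
  shows "\<bar>c\<bar> * l + A \<le> A * F"
proof -
  have "(\<bar>c\<bar> * inverse F) * (F * l) \<le> (A * ((1 - inverse F) / l)) * (F * l)"
    by (rule mult_right_mono[OF assms(3)]) (use assms in simp)
  also have "(A * ((1 - inverse F) / l)) * (F * l) = A * F - A"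
    using assms by (simp add: field_simps)
  also have "(\<bar>c\<bar> * inverse F) * (F * l) = \<bar>c\<bar> * l"
    using assms by (simp add: field_simps)
  finally show ?thesis by simp
qed

lemma alg2:
  fixes c A F l :: real
  assumes "F > 1" "l > 0"
  shows "inverse F * c + (- c * l / (F - 1)) * ((1 - inverse F) / l) = 0"
  using assms by (simp add: field_simps)


theorem theorem2p1:
  fixes \<Omega> :: "(real^'n::finite) set"
    and \<xi> :: "nat \<Rightarrow> real^'n \<Rightarrow> real"
    and lam :: "nat \<Rightarrow> real"
    and k m :: nat
    and y0 :: "real^'n \<Rightarrow> real"
  assumes "open \<Omega>" and "connected \<Omega>" and "bounded \<Omega>" and "\<Omega> \<noteq> {}"
    and "dirichlet_ONB \<Omega> \<xi> lam"
    and "m \<ge> 2" and "k \<ge> 1"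
    and "L2 \<Omega> y0" and "\<not> in_S \<Omega> \<xi> m y0"
  shows "\<not> has_optimal_controls \<Omega> \<Omega> \<xi> lam k m y0 \<longleftrightarrow>
           k < m \<and> (\<exists>i\<in>{k+1..m}. l2_inner \<Omega> y0 (\<xi> i) \<noteq> 0)"
proof -
  have L: "\<And>i. i \<ge> 1 \<Longrightarrow> L2 \<Omega> (\<xi> i)"
    using assms(5) unfolding dirichlet_ONB_def by auto
  have O: "\<And>i j. i \<ge> 1 \<Longrightarrow> j \<ge> 1 \<Longrightarrow> l2_inner \<Omega> (\<xi> i) (\<xi> j) = (if i = j then 1 else 0)"
    using assms(5) unfolding dirichlet_ONB_def by auto
  have l1: "0 < lam 1" "lam 1 < lam 2" "\<And>i. i \<ge> 2 \<Longrightarrow> lam i \<le> lam (Suc i)"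
    using assms(5) unfolding dirichlet_ONB_def by auto
  have lampos: "lam i > 0" if "i \<ge> 1" for i
    using that
  proof (induction i rule: dec_induct)
    case base then show ?case using l1 by simp
  next
    case (step n)
    show ?case
    proof (cases "n = 1")
      case True then show ?thesis using l1 by (simp add: numeral_2_eq_2)
    next
      case False then have "n \<ge> 2" using step by simp
      then show ?thesis using l1(3)[of n] step by simp
    qed
  qed
  define c where "c i = l2_inner \<Omega> y0 (\<xi> i)" for i
  have heat: "\<And>\<alpha> t i. i \<ge> 1 \<Longrightarrow> heat_coeff \<Omega> \<Omega> \<xi> lam (ctrl \<xi> k \<alpha>) y0 t i = exp (- lam i * t) * c i +
     (LINT s:{0..t}|lborel. exp (- lam i * (t - s)) * (if i \<in> {1..k} then \<alpha> i s else 0))"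
    unfolding c_def by (rule heat_ctrl[OF L O])
  show ?thesis
  proof
    assume nh: "\<not> has_optimal_controls \<Omega> \<Omega> \<xi> lam k m y0"
    show "k < m \<and> (\<exists>i\<in>{k+1..m}. l2_inner \<Omega> y0 (\<xi> i) \<noteq> 0)"
    proof (rule ccontr)
      assume H: "\<not> (k < m \<and> (\<exists>i\<in>{k+1..m}. l2_inner \<Omega> y0 (\<xi> i) \<noteq> 0))"
      have H': "c i = 0" if "i \<in> {1..m}" "i \<notin> {1..k}" for i
        using H that unfolding c_def by auto
      have "has_optimal_controls \<Omega> \<Omega> \<xi> lam k m y0"
        unfolding has_optimal_controls_def
      proof (intro allI impI)
        fix abar :: "nat \<Rightarrow> real"
        assume ab: "\<forall>i\<in>{1..k}. 0 < abar i"
        define I where "I = {1..min k m}"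
        have I: "\<And>i. i \<in> I \<Longrightarrow> i \<ge> 1 \<and> i \<in> {1..k} \<and> i \<in> {1..m}" unfolding I_def by auto
        define C where "C = {t. 0 \<le> t \<and> (\<forall>i\<in>I. \<bar>c i\<bar> * lam i + abar i \<le> abar i * exp (lam i * t))}"
        let ?R = "reach_times \<Omega> \<Omega> \<xi> lam k m abar y0"
        have RC: "?R = C"
        proof (intro equalityI subsetI)
          fix t assume "t \<in> ?R"
          then obtain u where t0: "0 \<le> t" and u: "u \<in> U_set \<xi> k abar"
            and st: "state_in_S \<Omega> \<Omega> \<xi> lam m u y0 t"
            unfolding reach_times_def by auto
          from u obtain \<alpha> where ua: "u = ctrl \<xi> k \<alpha>"
            and \<alpha>b: "\<And>i s. i \<in> {1..k} \<Longrightarrow> 0 \<le> s \<Longrightarrow> \<bar>\<alpha> i s\<bar> \<le> abar i"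
            unfolding U_set_def by auto
          have "\<forall>i\<in>I. \<bar>c i\<bar> * lam i + abar i \<le> abar i * exp (lam i * t)"
          proof
            fix i assume iI: "i \<in> I"
            note i1 = I[OF iI]
            have l: "lam i > 0" using lampos i1 by simp
            have z: "exp (- lam i * t) * c i + (LINT s:{0..t}|lborel. exp (- lam i * (t - s)) * \<alpha> i s) = 0"
              using st heat[of i \<alpha> t] i1 ua unfolding state_in_S_def by auto
            have b: "\<bar>LINT s:{0..t}|lborel. exp (- lam i * (t - s)) * \<alpha> i s\<bar> \<le> abar i * ((1 - exp (- lam i * t)) / lam i)"
              by (rule exp_integral_bound[OF l t0]) (use \<alpha>b i1 in auto)
            have "\<bar>exp (- lam i * t) * c i\<bar> \<le> abar i * ((1 - exp (- lam i * t)) / lam i)"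
              using z b by (metis abs_minus_cancel add_eq_0_iff2)
            then have "\<bar>c i\<bar> * inverse (exp (lam i * t)) \<le> abar i * ((1 - inverse (exp (lam i * t))) / lam i)"
              by (simp add: abs_mult exp_minus mult.commute)
            then show "\<bar>c i\<bar> * lam i + abar i \<le> abar i * exp (lam i * t)"
              by (rule alg1[OF exp_gt_zero l])
          qed
          then show "t \<in> C" using t0 unfolding C_def by auto
        next
          fix t assume tC: "t \<in> C"
          have t0: "0 \<le> t" and tc: "\<And>i. i \<in> I \<Longrightarrow> \<bar>c i\<bar> * lam i + abar i \<le> abar i * exp (lam i * t)"
            using tC unfolding C_def by auto
          define a where "a i = (if c i = 0 then 0 else - c i * lam i / (exp (lam i * t) - 1))" for i
          define \<alpha> where "\<alpha> i s = (if i \<in> I then a i else 0)" for i and s :: real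
          have F1: "exp (lam i * t) > 1" if "i \<in> I" "c i \<noteq> 0" for i
          proof -
            have "\<bar>c i\<bar> * lam i > 0" using that lampos I[OF that(1)] by simp
            then have "abar i < abar i * exp (lam i * t)" using tc[OF that(1)] by simp
            then show ?thesis using ab I[OF that(1)] by simp
          qed
          have aI: "\<bar>a i\<bar> \<le> abar i" if "i \<in> I" for i
          proof (cases "c i = 0")
            case True then show ?thesis using ab I[OF that] by (auto simp: a_def less_imp_le)
          next
            case False
            have F: "exp (lam i * t) - 1 > 0" using F1[OF that False] by simp
            have l: "lam i > 0" using lampos I[OF that] by simp
            have "\<bar>a i\<bar> = \<bar>c i\<bar> * lam i / (exp (lam i * t) - 1)"
              using False F l by (simp add: a_def abs_mult abs_divide)
            also have "\<dots> \<le> abar i"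
              using tc[OF that] F by (simp add: pos_divide_le_eq algebra_simps)
            finally show ?thesis .
          qed
          have uU: "ctrl \<xi> k \<alpha> \<in> U_set \<xi> k abar"
            unfolding U_set_def
          proof (intro CollectI exI conjI ballI)
            show "ctrl \<xi> k \<alpha> = ctrl \<xi> k \<alpha>" ..
          next
            fix i assume "i \<in> {1..k}"
            show "\<alpha> i \<in> borel_measurable (restrict_space borel {0..})"
              unfolding \<alpha>_def by simp
            show "\<forall>t\<ge>0. \<bar>\<alpha> i t\<bar> \<le> abar i"
              using aI ab \<open>i \<in> {1..k}\<close> by (auto simp: \<alpha>_def less_imp_le)
          qed
          have "state_in_S \<Omega> \<Omega> \<xi> lam m (ctrl \<xi> k \<alpha>) y0 t"
            unfolding state_in_S_def
          proof
            fix i assume im: "i \<in> {1..m}"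
            then have i1: "i \<ge> 1" by simp
            have l: "lam i > 0" using lampos i1 by simp
            show "heat_coeff \<Omega> \<Omega> \<xi> lam (ctrl \<xi> k \<alpha>) y0 t i = 0"
            proof (cases "i \<in> {1..k}")
              case True
              then have iI: "i \<in> I" using im unfolding I_def by auto
              have "heat_coeff \<Omega> \<Omega> \<xi> lam (ctrl \<xi> k \<alpha>) y0 t i
                  = exp (- lam i * t) * c i + (LINT s:{0..t}|lborel. exp (- lam i * (t - s)) * a i)"
                using heat[OF i1, of \<alpha> t] True iI by (simp add: \<alpha>_def)
              also have "\<dots> = exp (- lam i * t) * c i + a i * ((1 - exp (- lam i * t)) / lam i)"
                using const_integral[OF l t0] by simp
              also have "\<dots> = 0"
              proof (cases "c i = 0")
                case True then show ?thesis by (simp add: a_def)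
              next
                case False
                show ?thesis
                  using alg2[OF F1[OF iI False] l, of "c i"] False
                  by (simp add: a_def exp_minus)
              qed
              finally show ?thesis .
            next
              case False
              then have "c i = 0" using H' im by simp
              then show ?thesis using heat[OF i1, of \<alpha> t] False i1 by simp
            qed
          qed
          then show "t \<in> ?R" using t0 uU unfolding reach_times_def by auto
        qed
        have Cne: "C \<noteq> {}"
        proof -
          define t1 where "t1 = (\<Sum>i\<in>I. (\<bar>c i\<bar> * lam i + abar i) / (abar i * lam i))"
          have nn: "\<And>i. i \<in> I \<Longrightarrow> 0 \<le> (\<bar>c i\<bar> * lam i + abar i) / (abar i * lam i)"
            using ab lampos I by (simp add: less_imp_le)
          have "t1 \<in> C" unfolding C_def
          proof (intro CollectI conjI ballI)
            show "0 \<le> t1" unfolding t1_def using nn by (simp add: sum_nonneg)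
            fix i assume iI: "i \<in> I"
            have l: "lam i > 0" and a0: "abar i > 0" using lampos ab I[OF iI] by auto
            have "(\<bar>c i\<bar> * lam i + abar i) / (abar i * lam i) \<le> t1"
              unfolding t1_def by (rule member_le_sum) (use nn iI I_def in auto)
            then have le: "lam i * ((\<bar>c i\<bar> * lam i + abar i) / (abar i * lam i)) \<le> lam i * t1"
              using l by (simp only: mult_le_cancel_left_pos)
            have eq: "lam i * ((\<bar>c i\<bar> * lam i + abar i) / (abar i * lam i)) = (\<bar>c i\<bar> * lam i + abar i) / abar i"
              using l a0 by (simp add: field_simps)
            have "(\<bar>c i\<bar> * lam i + abar i) / abar i \<le> lam i * t1"
              using le unfolding eq .
            also have "lam i * t1 \<le> exp (lam i * t1)"
              using exp_ge_add_one_self[of "lam i * t1"] by linarith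
            finally show "\<bar>c i\<bar> * lam i + abar i \<le> abar i * exp (lam i * t1)"
              using a0 by (simp add: pos_divide_le_eq mult.commute)
          qed
          then show ?thesis by auto
        qed
        have Cb: "bdd_below C" unfolding C_def by (rule bdd_belowI[of _ 0]) auto
        have Cc: "closed C"
        proof -
          have "C = {t. 0 \<le> t} \<inter> (\<Inter>i\<in>I. {t. \<bar>c i\<bar> * lam i + abar i \<le> abar i * exp (lam i * t)})"
            unfolding C_def by auto
          also have "closed \<dots>"
            by (intro closed_Int closed_INT ballI closed_Collect_le continuous_intros)
          finally show ?thesis .
        qed
        have "Inf C \<in> C" by (rule closed_contains_Inf[OF Cne Cb Cc])
        then have "Inf ?R \<in> ?R" using RC by simp
        then obtain u where "u \<in> U_set \<xi> k abar" "state_in_S \<Omega> \<Omega> \<xi> lam m u y0 (Inf ?R)"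
          unfolding reach_times_def by auto
        then show "\<exists>u. optimal_control \<Omega> \<Omega> \<xi> lam k m abar y0 u"
          using \<open>Inf ?R \<in> ?R\<close> unfolding optimal_control_def by blast
      qed
      with nh show False by simp
    qed
  next
    assume A: "k < m \<and> (\<exists>i\<in>{k+1..m}. l2_inner \<Omega> y0 (\<xi> i) \<noteq> 0)"
    then obtain i0 where i0: "i0 \<in> {k+1..m}" "c i0 \<noteq> 0" unfolding c_def by auto
    show "\<not> has_optimal_controls \<Omega> \<Omega> \<xi> lam k m y0"
    proof
      assume "has_optimal_controls \<Omega> \<Omega> \<xi> lam k m y0"
      then obtain u where "optimal_control \<Omega> \<Omega> \<xi> lam k m (\<lambda>_. 1) y0 u"
        unfolding has_optimal_controls_def by force
      then have "reach_times \<Omega> \<Omega> \<xi> lam k m (\<lambda>_. 1) y0 \<noteq> {}"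
        unfolding optimal_control_def by simp
      then obtain t u' where u': "u' \<in> U_set \<xi> k (\<lambda>_. 1)" "state_in_S \<Omega> \<Omega> \<xi> lam m u' y0 t"
        unfolding reach_times_def by auto
      from u' obtain \<alpha> where ua: "u' = ctrl \<xi> k \<alpha>" unfolding U_set_def by auto
      have i1: "i0 \<ge> 1" "i0 \<notin> {1..k}" "i0 \<in> {1..m}" using i0 \<open>k \<ge> 1\<close> by auto
      have "heat_coeff \<Omega> \<Omega> \<xi> lam u' y0 t i0 = exp (- lam i0 * t) * c i0"
        using heat[OF i1(1), of \<alpha> t] i1 ua by simp
      moreover have "heat_coeff \<Omega> \<Omega> \<xi> lam u' y0 t i0 = 0"
        using u'(2) i1 unfolding state_in_S_def by auto
      ultimately show False using i0 by simp
    qed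
  qed
qed

end
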